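(* Let $\mathbf{F}$ be a finite field with $q$ elements, $k$ a field in which $q$ is nonzero, and $0\le r\le n$. An element $u\in\mathfrak{a}_{n,r}$ is the unit (two-sided identity element) of $\mathfrak{a}_{n,r}$ if and only if both of the following hold: (a) $[g^{-1}]\,u\,[g]=u$ in $k[\mathfrak{M}_n]$ for every $g\in\mathbf{GL}_n(\mathbf{F})$; (b) $u\cdot[e_{n,r}]=[e_{n,r}]$, where $e_{n,r}=\begin{pmatrix}I_r&\\&0_{n-r}\end{pmatrix}$.
   Context: $\mathfrak{M}_n$ is the monoid of $n\times n$ matrices over $\mathbf{F}$; $k[\mathfrak{M}_n]$ its monoid algebra with basis $[m]$. $\mathfrak{a}_{n,r}$ is the two-sided ideal spanned by $[m]$ with $\operatorname{rank}m\le r$. *)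

theory Defs
  imports "Jordan_Normal_Form.DL_Rank"
begin

text \<open>Monoid algebra k[M_n] of the monoid M_n of n x n matrices over a field 'f,
  represented as functions from matrices to k vanishing outside carrier_mat n n.\<close>

definition monalg :: "nat \<Rightarrow> ('f::field mat \<Rightarrow> 'k::field) set" where
  "monalg n = {u. \<forall>m. m \<notin> carrier_mat n n \<longrightarrow> u m = 0}"

definition monalg_mult :: "nat \<Rightarrow> ('f::field mat \<Rightarrow> 'k::field) \<Rightarrow> ('f mat \<Rightarrow> 'k) \<Rightarrow> ('f mat \<Rightarrow> 'k)" where
  "monalg_mult n u v = (\<lambda>m. if m \<in> carrier_mat n n then
      (\<Sum>p\<in>{(a, b). a \<in> carrier_mat n n \<and> b \<in> carrier_mat n n \<and> a * b = m}. u (fst p) * v (snd p))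
    else 0)"

definition monalg_basis :: "'f::field mat \<Rightarrow> ('f mat \<Rightarrow> 'k::field)" where
  "monalg_basis m = (\<lambda>x. if x = m then 1 else 0)"

definition rank_ideal :: "nat \<Rightarrow> nat \<Rightarrow> ('f::field mat \<Rightarrow> 'k::field) set" where
  "rank_ideal n r = {u \<in> monalg n. \<forall>m. u m \<noteq> 0 \<longrightarrow> vec_space.rank n m \<le> r}"

definition e_mat :: "nat \<Rightarrow> nat \<Rightarrow> 'f::field mat" where
  "e_mat n r = mat n n (\<lambda>(i, j). if i = j \<and> i < r then 1 else 0)"

definition is_unit_of :: "nat \<Rightarrow> ('f::field mat \<Rightarrow> 'k::field) set \<Rightarrow> ('f mat \<Rightarrow> 'k) \<Rightarrow> bool" where
  "is_unit_of n A u \<longleftrightarrow> u \<in> A \<and> (\<forall>v\<in>A. monalg_mult n u v = v \<and> monalg_mult n v u = v)"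

end

theory Submission
  imports Defs
begin


context vec_space begin

lemma rank_mono_span:
  assumes A: "A \<in> carrier_mat n nc" and B: "B \<in> carrier_mat n nc'"
    and sub: "set (cols A) \<subseteq> span (set (cols B))"
  shows "rank A \<le> rank B"
proof -
  define W where "W = span (set (cols B))"
  have WV: "subspace class_ring W V"
    unfolding W_def using B cols_dim carrier_matD(1) span_is_subspace by blast
  have AV: "subspace class_ring (span (set (cols A))) V"
    using A cols_dim carrier_matD(1) span_is_subspace by blast
  have "span (set (cols A)) \<subseteq> W"
    using sub WV unfolding W_def by (simp add: span_is_subset subspace_def)
  then have subspace: "subspace class_ring (span (set (cols A))) (vs W)"
    using nested_subspaces[OF WV AV] by blast
  have fW: "vectorspace.fin_dim class_ring (vs W)"
    unfolding W_def using B fin_dim_span_cols by blast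
  have fA: "vectorspace.fin_dim class_ring (span_vs (set (cols A)))"
    using A fin_dim_span_cols by blast
  have "rank A \<le> vectorspace.dim class_ring (vs W)" unfolding rank_def
    using vectorspace.subspace_dim[OF subspace_is_vs[OF WV] subspace fW] fA by auto
  then show ?thesis unfolding rank_def W_def by simp
qed

lemma rank_mult_left:
  assumes A: "A \<in> carrier_mat n nc" and B: "B \<in> carrier_mat nc nc'"
  shows "rank (A * B) \<le> rank A"
proof (rule rank_mono_span[OF _ A])
  show "A * B \<in> carrier_mat n nc'" using A B by auto
  show "set (cols (A * B)) \<subseteq> span (set (cols A))"
  proof
    fix x assume "x \<in> set (cols (A * B))"
    then obtain j where j: "j < nc'" "x = col (A * B) j"
      using A B by (auto simp: cols_def)
    then have x: "x = A *\<^sub>v col B j" using A B by auto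
    have "col B j \<in> carrier_vec (dim_col A)" using A B j by auto
    then have "x \<in> col_space A" using col_space_eq[OF A] x A by auto
    then show "x \<in> span (set (cols A))" unfolding col_space_def .
  qed
qed

lemma maximal_indpt_span:
  assumes B: "B \<in> carrier_mat n nc"
    and max: "maximal S (\<lambda>T. T \<subseteq> set (cols B) \<and> lin_indpt T)"
  shows "set (cols B) \<subseteq> span S"
proof
  fix s assume s: "s \<in> set (cols B)"
  have colsV: "set (cols B) \<subseteq> carrier_vec n" using B cols_dim by blast
  have SB: "S \<subseteq> set (cols B)" and li: "lin_indpt S" using max unfolding maximal_def by auto
  have SV: "S \<subseteq> carrier_vec n" using SB colsV by auto
  show "s \<in> span S"
  proof (cases "s \<in> S")
    case True then show ?thesis using in_own_span[OF SV] by auto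
  next
    case False
    show ?thesis
    proof (rule ccontr)
      assume ns: "s \<notin> span S"
      have sV: "s \<in> carrier_vec n" using s colsV by auto
      have "lin_indpt (S \<union> {s})" using lin_dep_iff_in_span[OF SV li sV False] ns by auto
      moreover have "S \<union> {s} \<subseteq> set (cols B)" using SB s by auto
      ultimately have "S \<union> {s} = S" using max unfolding maximal_def by blast
      then show False using False by auto
    qed
  qed
qed

lemma rank_factor:
  assumes B: "B \<in> carrier_mat n nc"
  shows "\<exists>M C. M \<in> carrier_mat n (rank B) \<and> C \<in> carrier_mat (rank B) nc \<and> B = M * C"
proof -
  obtain S where max: "maximal S (\<lambda>T. T \<subseteq> set (cols B) \<and> lin_indpt T)"
    using maximal_exists[of "(\<lambda>T. T \<subseteq> set (cols B) \<and> lin_indpt T)" "card (set (cols B))" "{}"]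
    by (meson List.finite_set card_mono empty_iff empty_subsetI finite_lin_indpt2 rev_finite_subset)
  have rk: "rank B = card S" using rank_card_indpt[OF B max] .
  have SB: "S \<subseteq> set (cols B)" using max unfolding maximal_def by auto
  have colsV: "set (cols B) \<subseteq> carrier_vec n" using B cols_dim by blast
  have SV: "S \<subseteq> carrier_vec n" using SB colsV by auto
  have finS: "finite S" using SB finite_subset by blast
  obtain bs where bs: "set bs = S" "distinct bs" using finite_distinct_list[OF finS] by blast
  have len: "length bs = rank B" using bs rk distinct_card by fastforce
  define M where "M = mat_of_cols n bs"
  have M: "M \<in> carrier_mat n (rank B)" unfolding M_def using len by auto
  have spB: "set (cols B) \<subseteq> span S" using maximal_indpt_span[OF B max] .
  have ex: "\<forall>j<nc. \<exists>c. c \<in> carrier_vec (rank B) \<and> col B j = M *\<^sub>v c"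
  proof (intro allI impI)
    fix j assume j: "j < nc"
    have "col B j \<in> set (cols B)" using B j by (auto simp: cols_def)
    then have "col B j \<in> span_list bs" using spB span_list_as_span[of bs] SV bs by auto
    then obtain c where "col B j = lincomb_list c bs" by (auto elim: in_span_listE)
    also have "\<dots> = M *\<^sub>v vec (length bs) c" unfolding M_def
      by (rule lincomb_list_as_mat_mult, insert SV bs, auto)
    finally have "col B j = M *\<^sub>v vec (length bs) c" .
    moreover have "vec (length bs) c \<in> carrier_vec (rank B)" using len by simp
    ultimately show "\<exists>c. c \<in> carrier_vec (rank B) \<and> col B j = M *\<^sub>v c" by blast
  qed
  then obtain cf where cf: "\<And>j. j < nc \<Longrightarrow> cf j \<in> carrier_vec (rank B) \<and> col B j = M *\<^sub>v cf j"
    by metis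
  define C where "C = mat_of_cols (rank B) (map cf [0..<nc])"
  have C: "C \<in> carrier_mat (rank B) nc" unfolding C_def by auto
  have "B = M * C"
  proof (rule eq_matI)
    show "dim_row B = dim_row (M * C)" "dim_col B = dim_col (M * C)" using B M C by auto
    fix i j assume i: "i < dim_row (M * C)" and j: "j < dim_col (M * C)"
    have ij: "i < n" "j < nc" using i j M C by auto
    have colC: "col C j = cf j" unfolding C_def using ij cf[OF ij(2)]
      by (auto simp: col_mat_of_cols)
    have "(M * C) $$ (i, j) = row M i \<bullet> col C j" using ij M C by auto
    also have "\<dots> = (M *\<^sub>v cf j) $ i" using colC ij M by auto
    also have "\<dots> = col B j $ i" using cf[OF ij(2)] by simp
    also have "\<dots> = B $$ (i, j)" using B ij by auto
    finally show "B $$ (i, j) = (M * C) $$ (i, j)" by simp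
  qed
  then show ?thesis using M C by blast
qed

lemma rank_mult_right:
  assumes A: "A \<in> carrier_mat n n" and B: "B \<in> carrier_mat n nc"
  shows "rank (A * B) \<le> rank B"
proof -
  obtain M C where M: "M \<in> carrier_mat n (rank B)" and C: "C \<in> carrier_mat (rank B) nc"
    and BMC: "B = M * C" using rank_factor[OF B] by blast
  have "A * B = (A * M) * C" using A M C BMC by (simp add: assoc_mult_mat)
  then have "rank (A * B) \<le> rank (A * M)" using rank_mult_left[of "A * M" "rank B" C nc] A M C by auto
  also have "\<dots> \<le> rank B" using rank_le_nc[of "A * M" "rank B"] A M by auto
  finally show ?thesis .
qed

lemma rank_transpose_le:
  assumes B: "B \<in> carrier_mat n n"
  shows "rank (transpose_mat B) \<le> rank B"
proof -
  obtain M C where M: "M \<in> carrier_mat n (rank B)" and C: "C \<in> carrier_mat (rank B) n"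
    and BMC: "B = M * C" using rank_factor[OF B] by blast
  have "transpose_mat B = transpose_mat C * transpose_mat M" using BMC M C
    by (simp add: transpose_mult)
  then have "rank (transpose_mat B) \<le> rank (transpose_mat C)"
    using rank_mult_left[of "transpose_mat C" "rank B" "transpose_mat M" n] M C by auto
  also have "\<dots> \<le> rank B" using rank_le_nc[of "transpose_mat C" "rank B"] C by auto
  finally show ?thesis .
qed

end


lemma e_mat_carrier[simp]: "e_mat n r \<in> carrier_mat n n"
  unfolding e_mat_def by auto

lemma e_mat_factor:
  "e_mat n r = mat n r (\<lambda>(i, j). if i = j then 1 else 0) * mat r n (\<lambda>(i, j). if i = j then 1 else 0)"
  (is "_ = ?B * ?C")
proof (rule eq_matI)
  fix i j assume i: "i < dim_row (?B * ?C)" and j: "j < dim_col (?B * ?C)"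
  have "(?B * ?C) $$ (i, j) = (\<Sum>k<r. (if i = k then 1 else 0) * (if k = j then 1 else 0))"
    using i j by (auto simp: scalar_prod_def intro!: sum.reindex_bij_witness[of _ id id])
  also have "\<dots> = (\<Sum>k<r. if k = i then (if i = j then 1 else 0) else 0)"
    by (rule sum.cong) auto
  also have "\<dots> = (if i = j \<and> i < r then 1 else 0)"
    by (subst sum.delta) auto
  finally show "e_mat n r $$ (i, j) = (?B * ?C) $$ (i, j)" using i j unfolding e_mat_def by auto
qed (auto simp: e_mat_def)

lemma rank_e_mat: "vec_space.rank n (e_mat n r :: 'f :: field mat) \<le> r"
proof -
  let ?B = "mat n r (\<lambda>(i, j). if i = j then 1 else (0::'f))"
  let ?C = "mat r n (\<lambda>(i, j). if i = j then 1 else (0::'f))"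
  have "vec_space.rank n (e_mat n r :: 'f mat) = vec_space.rank n (?B * ?C)"
    using e_mat_factor by metis
  also have "\<dots> \<le> vec_space.rank n ?B" by (rule vec_space.rank_mult_left) auto
  also have "\<dots> \<le> r" by (rule vec_space.rank_le_nc) auto
  finally show ?thesis .
qed



context vec_space begin

lemma normal_form:
  assumes m: "m \<in> carrier_mat n n" and rk: "rank m \<le> r"
  shows "\<exists>P Q R. P \<in> carrier_mat n n \<and> Q \<in> carrier_mat n n \<and> R \<in> carrier_mat n n \<and>
     P * Q = 1\<^sub>m n \<and> Q * P = 1\<^sub>m n \<and> m = Q * R \<and> e_mat n r * R = R"
proof -
  obtain R where g: "gauss_jordan_single m = R" by blast
  note gs = gauss_jordan_single[OF m g]
  have R: "R \<in> carrier_mat n n" using gs(2) .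
  obtain P Q where PQ: "R = P * m" "P \<in> carrier_mat n n" "Q \<in> carrier_mat n n"
      "P * Q = 1\<^sub>m n" "Q * P = 1\<^sub>m n" using gs(4) by blast
  obtain f where piv: "pivot_fun R f n" using gs(3) R unfolding row_echelon_form_def by auto
  have dR: "dim_row R = n" using R by auto
  note pd = pivot_funD[OF dR piv]
  have rkR: "rank R \<le> r" using rank_mult_right[OF PQ(2) m] PQ(1) rk by simp
  have Z: "f i = n" if i: "r \<le> i" "i < n" for i
  proof (rule ccontr)
    assume "f i \<noteq> n"
    then have fi: "f i < n" using pd(1)[OF i(2)] by auto
    have down: "k \<le> i \<Longrightarrow> f (i - k) < n" for k
    proof (induction k)
      case 0 then show ?case using fi by simp
    next
      case (Suc k)
      let ?i' = "i - Suc k"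
      have eq: "Suc ?i' = i - k" using Suc.prems by simp
      have lt: "f (Suc ?i') < n" using Suc eq by simp
      have "?i' < n" "Suc ?i' < n" using Suc.prems i eq by auto
      from pd(3)[OF this] lt show ?case by auto
    qed
    have fle: "i' \<le> i \<Longrightarrow> f i' < n" for i'
      using down[of "i - i'"] by simp
    have colf: "col R (f i') = unit_vec n i'" if "i' \<le> i" for i'
    proof (rule eq_vecI)
      have i'n: "i' < n" using that i by simp
      show "dim_vec (col R (f i')) = dim_vec (unit_vec n i')" using R by simp
      fix k assume "k < dim_vec (unit_vec n i')"
      then have k: "k < n" by simp
      show "col R (f i') $ k = unit_vec n i' $ k"
        using pd(4)[OF i'n fle[OF that]] pd(5)[OF i'n fle[OF that] k] k R fle[OF that]
        by (cases "k = i'") (auto simp: unit_vec_def)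
    qed
    define U where "U = (\<lambda>i'. unit_vec n i' :: 'a vec) ` {0..i}"
    have inj: "inj_on (\<lambda>i'. unit_vec n i' :: 'a vec) {0..i}"
    proof (rule inj_onI)
      fix a b assume a: "a \<in> {0..i}" and b: "b \<in> {0..i}" and e: "(unit_vec n a :: 'a vec) = unit_vec n b"
      have "a < n" "b < n" using a b i by auto
      then have "(unit_vec n a :: 'a vec) $ a = unit_vec n b $ a" using e by simp
      then show "a = b" using \<open>a < n\<close> \<open>b < n\<close> by (cases "a = b") auto
    qed
    have cardU: "card U = Suc i" unfolding U_def using card_image[OF inj] by simp
    have UR: "U \<subseteq> set (cols R)"
    proof
      fix x assume "x \<in> U"
      then obtain i' where i': "i' \<le> i" "x = unit_vec n i'" unfolding U_def by auto
      have "col R (f i') \<in> set (cols R)" using fle[OF i'(1)] R by (auto simp: cols_def)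
      then show "x \<in> set (cols R)" using colf[OF i'(1)] i' by simp
    qed
    have "U \<subseteq> set (unit_vecs n)" unfolding U_def unit_vecs_def using i by auto
    moreover have "lin_indpt (set (unit_vecs n))" using unit_vecs_basis unfolding basis_def by auto
    ultimately have "lin_indpt U" using subset_li_is_li by auto
    from rank_ge_card_indpt[OF R UR this] cardU rkR i show False by simp
  qed
  have eR: "e_mat n r * R = R"
  proof (rule eq_matI)
    fix i j assume i: "i < dim_row R" and j: "j < dim_col R"
    have ij: "i < n" "j < n" using i j R by auto
    have "(e_mat n r * R) $$ (i, j) = (\<Sum>k<n. (if i = k \<and> i < r then 1 else 0) * R $$ (k, j))"
      using ij R by (auto simp: e_mat_def scalar_prod_def intro!: sum.reindex_bij_witness[of _ id id])
    also have "\<dots> = (\<Sum>k<n. if k = i then (if i < r then R $$ (i, j) else 0) else 0)"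
      by (rule sum.cong) auto
    also have "\<dots> = (if i < r then R $$ (i, j) else 0)" using ij by (subst sum.delta) auto
    also have "\<dots> = R $$ (i, j)"
    proof (cases "i < r")
      case False
      then have "f i = n" using Z ij by auto
      then show ?thesis using pd(2)[OF ij(1), of j] ij False by simp
    qed simp
    finally show "(e_mat n r * R) $$ (i, j) = R $$ (i, j)" .
  qed (use R in \<open>auto simp: e_mat_def\<close>)
  have "Q * R = m" using PQ m by (simp add: assoc_mult_mat[symmetric])
  then show ?thesis using PQ R eR by metis
qed

end


lemma finite_carrier_mat_sq:
  assumes "finite (UNIV :: 'f set)"
  shows "finite (carrier_mat n n :: 'f mat set)"
proof -
  let ?I = "{0..<n} \<times> {0..<n}"
  let ?f = "\<lambda>(A :: 'f mat). \<lambda>ij. if ij \<in> ?I then A $$ ij else undefined"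
  have "inj_on ?f (carrier_mat n n)"
  proof (rule inj_onI)
    fix A B :: "'f mat" assume A: "A \<in> carrier_mat n n" and B: "B \<in> carrier_mat n n" and e: "?f A = ?f B"
    show "A = B"
    proof (rule eq_matI)
      fix i j assume "i < dim_row B" "j < dim_col B"
      then have "(i, j) \<in> ?I" using B by auto
      then show "A $$ (i, j) = B $$ (i, j)" using fun_cong[OF e, of "(i, j)"] by simp
    qed (use A B in auto)
  qed
  moreover have "?f ` carrier_mat n n \<subseteq> PiE ?I (\<lambda>_. UNIV)" by (auto simp: PiE_def extensional_def)
  moreover have "finite (PiE ?I (\<lambda>_. (UNIV :: 'f set)))" using assms by (intro finite_PiE) auto
  ultimately show ?thesis by (rule inj_on_finite)
qed

lemma monalg_mult_alt:
  fixes u v :: "'f :: field mat \<Rightarrow> 'k :: field" and m :: "'f mat"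
  assumes fC: "finite (carrier_mat n n :: 'f :: field mat set)"
  shows "monalg_mult n u v m = (\<Sum>a\<in>carrier_mat n n. \<Sum>b\<in>carrier_mat n n.
      if a * b = m then u a * v b else 0)"
proof (cases "m \<in> carrier_mat n n")
  case True
  let ?C = "carrier_mat n n :: 'f mat set"
  have set: "{(a, b). a \<in> ?C \<and> b \<in> ?C \<and> a * b = m} = {p \<in> ?C \<times> ?C. fst p * snd p = m}" by auto
  have "monalg_mult n u v m = (\<Sum>p\<in>{p \<in> ?C \<times> ?C. fst p * snd p = m}. u (fst p) * v (snd p))"
    unfolding monalg_mult_def using True set by simp
  also have "\<dots> = (\<Sum>p\<in>?C \<times> ?C. if fst p * snd p = m then u (fst p) * v (snd p) else 0)"
    using fC by (simp add: sum.inter_filter)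
  also have "\<dots> = (\<Sum>a\<in>?C. \<Sum>b\<in>?C. if a * b = m then u a * v b else 0)"
    by (simp add: sum.cartesian_product case_prod_beta)
  finally show ?thesis .
next
  case False
  have "a * b \<noteq> m" if "a \<in> carrier_mat n n" "b \<in> carrier_mat n n" for a b :: "'f mat"
    using that False by auto
  then show ?thesis unfolding monalg_mult_def using False by (auto intro!: sum.neutral)
qed

lemma mult_basis_left:
  fixes a b m :: "'f :: field mat" and u v :: "'f mat \<Rightarrow> 'k :: field"
  assumes fC: "finite (carrier_mat n n :: 'f mat set)" and a: "a \<in> carrier_mat n n"
  shows "monalg_mult n (monalg_basis a) v m = (\<Sum>b\<in>carrier_mat n n. if a * b = m then v b else 0)"
proof -
  have "monalg_mult n (monalg_basis a) v m = (\<Sum>a'\<in>carrier_mat n n. if a' = a then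
     (\<Sum>b\<in>carrier_mat n n. if a * b = m then v b else (0 :: 'k :: field)) else 0)"
    unfolding monalg_mult_alt[OF fC] by (rule sum.cong) (auto simp: monalg_basis_def intro!: sum.cong)
  also have "\<dots> = (\<Sum>b\<in>carrier_mat n n. if a * b = m then v b else 0)"
    using fC a by (simp add: sum.delta)
  finally show ?thesis .
qed

lemma mult_basis_right:
  fixes a b m :: "'f :: field mat" and u v :: "'f mat \<Rightarrow> 'k :: field"
  assumes fC: "finite (carrier_mat n n :: 'f mat set)" and b: "b \<in> carrier_mat n n"
  shows "monalg_mult n u (monalg_basis b) m = (\<Sum>a\<in>carrier_mat n n. if a * b = m then u a else 0)"
proof -
  have "monalg_mult n u (monalg_basis b) m = (\<Sum>b'\<in>carrier_mat n n. \<Sum>a\<in>carrier_mat n n.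
      if a * b' = m then u a * monalg_basis b b' else (0 :: 'k :: field))"
    unfolding monalg_mult_alt[OF fC] by (rule sum.swap)
  also have "\<dots> = (\<Sum>b'\<in>carrier_mat n n. if b' = b then
     (\<Sum>a\<in>carrier_mat n n. if a * b = m then u a else (0 :: 'k :: field)) else 0)"
    by (rule sum.cong) (auto simp: monalg_basis_def intro!: sum.cong)
  also have "\<dots> = (\<Sum>a\<in>carrier_mat n n. if a * b = m then u a else 0)"
    using fC b by (simp add: sum.delta)
  finally show ?thesis .
qed

lemma mult_basis_basis:
  fixes a b m :: "'f :: field mat" and u v :: "'f mat \<Rightarrow> 'k :: field"
  assumes fC: "finite (carrier_mat n n :: 'f mat set)"
    and a: "a \<in> carrier_mat n n" and b: "b \<in> carrier_mat n n"
  shows "monalg_mult n (monalg_basis a) (monalg_basis b) = (monalg_basis (a * b) :: 'f mat \<Rightarrow> 'k)"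
proof
  fix m
  have "monalg_mult n (monalg_basis a) (monalg_basis b) m =
    (\<Sum>b'\<in>carrier_mat n n. if b' = b then (if a * b = m then 1 else 0) else (0 :: 'k))"
    unfolding mult_basis_left[OF fC a] by (rule sum.cong) (auto simp: monalg_basis_def)
  also have "\<dots> = monalg_basis (a * b) m" using fC b by (simp add: sum.delta monalg_basis_def)
  finally show "monalg_mult n (monalg_basis a) (monalg_basis b) m = (monalg_basis (a * b) m :: 'k)" .
qed

lemma mult_one_left:
  fixes a b m :: "'f :: field mat" and u v :: "'f mat \<Rightarrow> 'k :: field"
  assumes fC: "finite (carrier_mat n n :: 'f mat set)" and v: "v \<in> monalg n"
  shows "monalg_mult n (monalg_basis (1\<^sub>m n)) v = v"
proof
  fix m
  have "monalg_mult n (monalg_basis (1\<^sub>m n)) v m = (\<Sum>b\<in>carrier_mat n n. if b = m then v b else 0)"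
    unfolding mult_basis_left[OF fC one_carrier_mat] by (rule sum.cong) auto
  also have "\<dots> = v m" using fC v by (subst sum.delta) (auto simp: monalg_def)
  finally show "monalg_mult n (monalg_basis (1\<^sub>m n)) v m = v m" .
qed

lemma mult_one_right:
  fixes a b m :: "'f :: field mat" and u v :: "'f mat \<Rightarrow> 'k :: field"
  assumes fC: "finite (carrier_mat n n :: 'f mat set)" and v: "v \<in> monalg n"
  shows "monalg_mult n v (monalg_basis (1\<^sub>m n)) = v"
proof
  fix m
  have "monalg_mult n v (monalg_basis (1\<^sub>m n)) m = (\<Sum>b\<in>carrier_mat n n. if b = m then v b else 0)"
    unfolding mult_basis_right[OF fC one_carrier_mat] by (rule sum.cong) auto
  also have "\<dots> = v m" using fC v by (subst sum.delta) (auto simp: monalg_def)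
  finally show "monalg_mult n v (monalg_basis (1\<^sub>m n)) m = v m" .
qed



lemma sum_swap4:
  "(\<Sum>c\<in>C. \<Sum>d\<in>D. \<Sum>a\<in>A. \<Sum>b\<in>B. G c d a b) = (\<Sum>a\<in>A. \<Sum>b\<in>B. \<Sum>d\<in>D. \<Sum>c\<in>C. G c d a b)"
proof -
  have 1: "(\<Sum>d\<in>D. \<Sum>a\<in>A. \<Sum>b\<in>B. G c d a b) = (\<Sum>a\<in>A. \<Sum>b\<in>B. \<Sum>d\<in>D. G c d a b)" for c
  proof -
    have "(\<Sum>d\<in>D. \<Sum>a\<in>A. \<Sum>b\<in>B. G c d a b) = (\<Sum>a\<in>A. \<Sum>d\<in>D. \<Sum>b\<in>B. G c d a b)"
      by (rule sum.swap)
    also have "\<dots> = (\<Sum>a\<in>A. \<Sum>b\<in>B. \<Sum>d\<in>D. G c d a b)"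
      by (rule sum.cong[OF refl], rule sum.swap)
    finally show ?thesis .
  qed
  have "(\<Sum>c\<in>C. \<Sum>d\<in>D. \<Sum>a\<in>A. \<Sum>b\<in>B. G c d a b) = (\<Sum>c\<in>C. \<Sum>a\<in>A. \<Sum>b\<in>B. \<Sum>d\<in>D. G c d a b)"
    using 1 by simp
  also have "\<dots> = (\<Sum>a\<in>A. \<Sum>c\<in>C. \<Sum>b\<in>B. \<Sum>d\<in>D. G c d a b)" by (rule sum.swap)
  also have "\<dots> = (\<Sum>a\<in>A. \<Sum>b\<in>B. \<Sum>c\<in>C. \<Sum>d\<in>D. G c d a b)"
    by (rule sum.cong[OF refl], rule sum.swap)
  also have "\<dots> = (\<Sum>a\<in>A. \<Sum>b\<in>B. \<Sum>d\<in>D. \<Sum>c\<in>C. G c d a b)"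
    by (rule sum.cong[OF refl], rule sum.cong[OF refl], rule sum.swap)
  finally show ?thesis .
qed

lemma sum_swap3:
  "(\<Sum>e\<in>E. \<Sum>b\<in>B. \<Sum>d\<in>D. G e b d) = (\<Sum>b\<in>B. \<Sum>d\<in>D. \<Sum>e\<in>E. G e b d)"
proof -
  have "(\<Sum>e\<in>E. \<Sum>b\<in>B. \<Sum>d\<in>D. G e b d) = (\<Sum>b\<in>B. \<Sum>e\<in>E. \<Sum>d\<in>D. G e b d)" by (rule sum.swap)
  also have "\<dots> = (\<Sum>b\<in>B. \<Sum>d\<in>D. \<Sum>e\<in>E. G e b d)" by (rule sum.cong[OF refl], rule sum.swap)
  finally show ?thesis .
qed

lemma sum_collapse:
  assumes "finite C" "x \<in> C"
  shows "(\<Sum>c\<in>C. if x = c \<and> P c then g c else (0 :: 'a :: comm_monoid_add)) = (if P x then g x else 0)"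
proof -
  have "(\<Sum>c\<in>C. if x = c \<and> P c then g c else (0 :: 'a)) = (\<Sum>c\<in>C. if c = x then (if P x then g x else 0) else 0)"
    by (rule sum.cong) auto
  also have "\<dots> = (if P x then g x else 0)" using assms by (simp add: sum.delta)
  finally show ?thesis .
qed

lemma monalg_mult_assoc:
  fixes u v w :: "'f :: field mat \<Rightarrow> 'k :: field"
  assumes fC: "finite (carrier_mat n n :: 'f mat set)"
  shows "monalg_mult n (monalg_mult n u v) w = monalg_mult n u (monalg_mult n v w)"
proof (rule ext)
  fix m :: "'f mat"
  let ?C = "carrier_mat n n :: 'f mat set"
  define F where "F = (\<Sum>a\<in>?C. \<Sum>b\<in>?C. \<Sum>d\<in>?C. if a * b * d = m then u a * v b * w d else 0)"
  have "monalg_mult n (monalg_mult n u v) w m = (\<Sum>c\<in>?C. \<Sum>d\<in>?C. if c * d = m then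
      (\<Sum>a\<in>?C. \<Sum>b\<in>?C. if a * b = c then u a * v b else 0) * w d else 0)"
    by (simp only: monalg_mult_alt[OF fC])
  also have "\<dots> = (\<Sum>c\<in>?C. \<Sum>d\<in>?C. \<Sum>a\<in>?C. \<Sum>b\<in>?C.
      if a * b = c \<and> c * d = m then u a * v b * w d else 0)"
  proof (intro sum.cong refl)
    fix c d
    show "(if c * d = m then (\<Sum>a\<in>?C. \<Sum>b\<in>?C. if a * b = c then u a * v b else 0) * w d else 0) =
      (\<Sum>a\<in>?C. \<Sum>b\<in>?C. if a * b = c \<and> c * d = m then u a * v b * w d else 0)"
      by (cases "c * d = m") (auto simp: sum_distrib_right intro!: sum.cong)
  qed
  also have "\<dots> = (\<Sum>a\<in>?C. \<Sum>b\<in>?C. \<Sum>d\<in>?C. \<Sum>c\<in>?C.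
      if a * b = c \<and> c * d = m then u a * v b * w d else 0)"
    by (rule sum_swap4)
  also have "\<dots> = F" unfolding F_def
  proof (intro sum.cong refl)
    fix a b d assume a: "a \<in> ?C" and b: "b \<in> ?C"
    have ab: "a * b \<in> ?C" using a b by auto
    show "(\<Sum>c\<in>?C. if a * b = c \<and> c * d = m then u a * v b * w d else 0) =
      (if a * b * d = m then u a * v b * w d else 0)"
      using sum_collapse[OF fC ab, of "\<lambda>c. c * d = m" "\<lambda>_. u a * v b * w d"] by simp
  qed
  finally have L: "monalg_mult n (monalg_mult n u v) w m = F" .
  have "monalg_mult n u (monalg_mult n v w) m = (\<Sum>a\<in>?C. \<Sum>e\<in>?C. if a * e = m then
      u a * (\<Sum>b\<in>?C. \<Sum>d\<in>?C. if b * d = e then v b * w d else 0) else 0)"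
    by (simp only: monalg_mult_alt[OF fC])
  also have "\<dots> = (\<Sum>a\<in>?C. \<Sum>e\<in>?C. \<Sum>b\<in>?C. \<Sum>d\<in>?C.
      if b * d = e \<and> a * e = m then u a * v b * w d else 0)"
  proof (intro sum.cong refl)
    fix a e
    show "(if a * e = m then u a * (\<Sum>b\<in>?C. \<Sum>d\<in>?C. if b * d = e then v b * w d else 0) else 0) =
      (\<Sum>b\<in>?C. \<Sum>d\<in>?C. if b * d = e \<and> a * e = m then u a * v b * w d else 0)"
      by (cases "a * e = m") (auto simp: sum_distrib_left mult.assoc intro!: sum.cong)
  qed
  also have "\<dots> = (\<Sum>a\<in>?C. \<Sum>b\<in>?C. \<Sum>d\<in>?C. \<Sum>e\<in>?C.
      if b * d = e \<and> a * e = m then u a * v b * w d else 0)"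
    by (rule sum.cong[OF refl], rule sum_swap3)
  also have "\<dots> = F" unfolding F_def
  proof (intro sum.cong refl)
    fix a b d assume a: "a \<in> ?C" and b: "b \<in> ?C" and d: "d \<in> ?C"
    have bd: "b * d \<in> ?C" using b d by auto
    have "a * (b * d) = a * b * d" using a b d by (simp add: assoc_mult_mat)
    then show "(\<Sum>e\<in>?C. if b * d = e \<and> a * e = m then u a * v b * w d else 0) =
      (if a * b * d = m then u a * v b * w d else 0)"
      using sum_collapse[OF fC bd, of "\<lambda>e. a * e = m" "\<lambda>_. u a * v b * w d"] by simp
  qed
  finally show "monalg_mult n (monalg_mult n u v) w m = monalg_mult n u (monalg_mult n v w) m"
    using L by simp
qed



lemma monalg_mult_monalg: "monalg_mult n u v \<in> monalg n"
  unfolding monalg_def monalg_mult_def by auto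

lemma sum_nonzero_ex:
  assumes "(\<Sum>a\<in>A. f a) \<noteq> (0 :: 'a :: comm_monoid_add)"
  shows "\<exists>a\<in>A. f a \<noteq> 0"
  using assms sum.neutral by metis

lemma ideal_mult_left:
  fixes x v :: "'f :: field mat \<Rightarrow> 'k :: field"
  assumes fC: "finite (carrier_mat n n :: 'f mat set)" and v: "v \<in> rank_ideal n r"
  shows "monalg_mult n x v \<in> rank_ideal n r"
  unfolding rank_ideal_def
proof (intro CollectI conjI allI impI monalg_mult_monalg)
  fix m assume "monalg_mult n x v m \<noteq> 0"
  then obtain a b where a: "a \<in> carrier_mat n n" and b: "b \<in> carrier_mat n n"
    and nz: "(if a * b = m then x a * v b else 0) \<noteq> 0"
    unfolding monalg_mult_alt[OF fC] by (auto dest!: sum_nonzero_ex)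
  then have ab: "a * b = m" and vb: "v b \<noteq> 0" by (auto split: if_splits)
  have "vec_space.rank n b \<le> r" using v vb unfolding rank_ideal_def by auto
  moreover have "vec_space.rank n (a * b) \<le> vec_space.rank n b"
    by (rule vec_space.rank_mult_right[OF a b])
  ultimately show "vec_space.rank n m \<le> r" using ab by simp
qed

lemma ideal_mult_right:
  fixes x v :: "'f :: field mat \<Rightarrow> 'k :: field"
  assumes fC: "finite (carrier_mat n n :: 'f mat set)" and v: "v \<in> rank_ideal n r"
  shows "monalg_mult n v x \<in> rank_ideal n r"
  unfolding rank_ideal_def
proof (intro CollectI conjI allI impI monalg_mult_monalg)
  fix m assume "monalg_mult n v x m \<noteq> 0"
  then obtain a b where a: "a \<in> carrier_mat n n" and b: "b \<in> carrier_mat n n"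
    and nz: "(if a * b = m then v a * x b else 0) \<noteq> 0"
    unfolding monalg_mult_alt[OF fC] by (auto dest!: sum_nonzero_ex)
  then have ab: "a * b = m" and va: "v a \<noteq> 0" by (auto split: if_splits)
  have "vec_space.rank n a \<le> r" using v va unfolding rank_ideal_def by auto
  moreover have "vec_space.rank n (a * b) \<le> vec_space.rank n a"
    by (rule vec_space.rank_mult_left[OF a b])
  ultimately show "vec_space.rank n m \<le> r" using ab by simp
qed

lemma basis_in_ideal:
  fixes m :: "'f :: field mat"
  assumes m: "m \<in> carrier_mat n n" and rk: "vec_space.rank n m \<le> r"
  shows "(monalg_basis m :: 'f mat \<Rightarrow> 'k :: field) \<in> rank_ideal n r"
  using m rk unfolding rank_ideal_def monalg_def monalg_basis_def by auto

lemma left_id_from_basis: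
  fixes u v :: "'f :: field mat \<Rightarrow> 'k :: field"
  assumes fC: "finite (carrier_mat n n :: 'f mat set)"
    and bas: "\<And>m. m \<in> carrier_mat n n \<Longrightarrow> vec_space.rank n m \<le> r \<Longrightarrow>
      monalg_mult n u (monalg_basis m) = monalg_basis m"
    and v: "v \<in> rank_ideal n r"
  shows "monalg_mult n u v = v"
proof
  fix m :: "'f mat"
  let ?C = "carrier_mat n n :: 'f mat set"
  have "monalg_mult n u v m = (\<Sum>b\<in>?C. \<Sum>a\<in>?C. if a * b = m then u a * v b else 0)"
    unfolding monalg_mult_alt[OF fC] by (rule sum.swap)
  also have "\<dots> = (\<Sum>b\<in>?C. v b * monalg_mult n u (monalg_basis b) m)"
  proof (rule sum.cong[OF refl])
    fix b assume b: "b \<in> ?C"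
    show "(\<Sum>a\<in>?C. if a * b = m then u a * v b else 0) = v b * monalg_mult n u (monalg_basis b) m"
      unfolding mult_basis_right[OF fC b] by (auto simp: sum_distrib_left mult.commute intro!: sum.cong)
  qed
  also have "\<dots> = (\<Sum>b\<in>?C. if b = m then v b else 0)"
  proof (rule sum.cong[OF refl])
    fix b assume b: "b \<in> ?C"
    show "v b * monalg_mult n u (monalg_basis b) m = (if b = m then v b else 0)"
    proof (cases "v b = 0")
      case False
      then have "vec_space.rank n b \<le> r" using v unfolding rank_ideal_def by auto
      then show ?thesis using bas[OF b] by (auto simp: monalg_basis_def)
    qed auto
  qed
  also have "\<dots> = v m" using fC v by (simp add: sum.delta monalg_def rank_ideal_def)
  finally show "monalg_mult n u v m = v m" .
qed

lemma right_id_from_basis: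
  fixes u v :: "'f :: field mat \<Rightarrow> 'k :: field"
  assumes fC: "finite (carrier_mat n n :: 'f mat set)"
    and bas: "\<And>m. m \<in> carrier_mat n n \<Longrightarrow> vec_space.rank n m \<le> r \<Longrightarrow>
      monalg_mult n (monalg_basis m) u = monalg_basis m"
    and v: "v \<in> rank_ideal n r"
  shows "monalg_mult n v u = v"
proof
  fix m :: "'f mat"
  let ?C = "carrier_mat n n :: 'f mat set"
  have "monalg_mult n v u m = (\<Sum>a\<in>?C. \<Sum>b\<in>?C. if a * b = m then v a * u b else 0)"
    unfolding monalg_mult_alt[OF fC] by simp
  also have "\<dots> = (\<Sum>a\<in>?C. v a * monalg_mult n (monalg_basis a) u m)"
  proof (rule sum.cong[OF refl])
    fix a assume a: "a \<in> ?C"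
    show "(\<Sum>b\<in>?C. if a * b = m then v a * u b else 0) = v a * monalg_mult n (monalg_basis a) u m"
      unfolding mult_basis_left[OF fC a] by (auto simp: sum_distrib_left intro!: sum.cong)
  qed
  also have "\<dots> = (\<Sum>a\<in>?C. if a = m then v a else 0)"
  proof (rule sum.cong[OF refl])
    fix a assume a: "a \<in> ?C"
    show "v a * monalg_mult n (monalg_basis a) u m = (if a = m then v a else 0)"
    proof (cases "v a = 0")
      case False
      then have "vec_space.rank n a \<le> r" using v unfolding rank_ideal_def by auto
      then show ?thesis using bas[OF a] by (auto simp: monalg_basis_def)
    qed auto
  qed
  also have "\<dots> = v m" using fC v by (simp add: sum.delta monalg_def rank_ideal_def)
  finally show "monalg_mult n v u m = v m" .
qed

definition monalg_T :: "('f :: field mat \<Rightarrow> 'k) \<Rightarrow> ('f mat \<Rightarrow> 'k)" where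
  "monalg_T u = (\<lambda>m. u (transpose_mat m))"

lemma sum_transpose:
  "(\<Sum>a\<in>carrier_mat n n. g a) = (\<Sum>a\<in>carrier_mat n n. g (transpose_mat a))"
  by (rule sum.reindex_bij_witness[where i = transpose_mat and j = transpose_mat]) auto

lemma monalg_T_mult:
  fixes v w :: "'f :: field mat \<Rightarrow> 'k :: field"
  assumes fC: "finite (carrier_mat n n :: 'f mat set)"
  shows "monalg_T (monalg_mult n v w) = monalg_mult n (monalg_T w) (monalg_T v)"
proof
  fix m :: "'f mat"
  let ?C = "carrier_mat n n :: 'f mat set"
  have eq: "(transpose_mat a * transpose_mat b = m) = (b * a = transpose_mat m)"
    if "a \<in> ?C" "b \<in> ?C" for a b
  proof -
    have "transpose_mat a * transpose_mat b = transpose_mat (b * a)" using that by (simp add: transpose_mult)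
    then show ?thesis by auto
  qed
  have "monalg_mult n (monalg_T w) (monalg_T v) m =
    (\<Sum>a\<in>?C. \<Sum>b\<in>?C. if a * b = m then w (transpose_mat a) * v (transpose_mat b) else 0)"
    unfolding monalg_mult_alt[OF fC] monalg_T_def by simp
  also have "\<dots> = (\<Sum>a\<in>?C. \<Sum>b\<in>?C. if transpose_mat a * transpose_mat b = m then w a * v b else 0)"
    by (subst sum_transpose, rule sum.cong[OF refl], subst sum_transpose) simp
  also have "\<dots> = (\<Sum>a\<in>?C. \<Sum>b\<in>?C. if b * a = transpose_mat m then v b * w a else 0)"
    using eq by (auto simp: mult.commute intro!: sum.cong)
  also have "\<dots> = (\<Sum>b\<in>?C. \<Sum>a\<in>?C. if b * a = transpose_mat m then v b * w a else 0)"
    by (rule sum.swap)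
  also have "\<dots> = monalg_T (monalg_mult n v w) m"
    unfolding monalg_mult_alt[OF fC] monalg_T_def by simp
  finally show "monalg_T (monalg_mult n v w) m = monalg_mult n (monalg_T w) (monalg_T v) m" by simp
qed

lemma monalg_T_basis: "monalg_T (monalg_basis m) = monalg_basis (transpose_mat m)"
  unfolding monalg_T_def monalg_basis_def by (auto intro!: ext)

lemma monalg_T_T: "monalg_T (monalg_T u) = u"
  unfolding monalg_T_def by simp

lemma monalg_T_ideal:
  fixes u :: "'f :: field mat \<Rightarrow> 'k :: field"
  assumes u: "u \<in> rank_ideal n r"
  shows "monalg_T u \<in> rank_ideal n r"
  unfolding rank_ideal_def monalg_def
proof (intro CollectI conjI allI impI)
  fix m :: "'f mat"
  assume "m \<notin> carrier_mat n n"
  then have "transpose_mat m \<notin> carrier_mat n n" by auto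
  then show "monalg_T u m = 0" using u unfolding monalg_T_def rank_ideal_def monalg_def by auto
next
  fix m :: "'f mat"
  assume nz: "monalg_T u m \<noteq> 0"
  have mT: "transpose_mat m \<in> carrier_mat n n"
  proof (rule ccontr)
    assume "transpose_mat m \<notin> carrier_mat n n"
    then have "u (transpose_mat m) = 0" using u unfolding rank_ideal_def monalg_def by blast
    then show False using nz unfolding monalg_T_def by simp
  qed
  have "vec_space.rank n (transpose_mat m) \<le> r" using u nz unfolding monalg_T_def rank_ideal_def by auto
  moreover have "vec_space.rank n (transpose_mat (transpose_mat m)) \<le> vec_space.rank n (transpose_mat m)"
    by (rule vec_space.rank_transpose_le[OF mT])
  ultimately show "vec_space.rank n m \<le> r" by simp
qed



theorem lemma4p4:
  fixes u :: "'f::field mat \<Rightarrow> 'k::field" and n r :: nat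
  assumes "finite (UNIV :: 'f set)"
    and "(of_nat (card (UNIV :: 'f set)) :: 'k) \<noteq> 0"
    and "r \<le> n"
    and "u \<in> rank_ideal n r"
  shows "is_unit_of n (rank_ideal n r) u \<longleftrightarrow>
    ((\<forall>g\<in>carrier_mat n n. \<forall>h\<in>carrier_mat n n. g * h = 1\<^sub>m n \<and> h * g = 1\<^sub>m n \<longrightarrow>
        monalg_mult n (monalg_mult n (monalg_basis h) u) (monalg_basis g) = u)
     \<and> monalg_mult n u (monalg_basis (e_mat n r)) = monalg_basis (e_mat n r))"
proof -
  have fC: "finite (carrier_mat n n :: 'f mat set)" using finite_carrier_mat_sq[OF assms(1)] .
  have uA: "u \<in> rank_ideal n r" using assms(4) .
  let ?A = "rank_ideal n r :: ('f mat \<Rightarrow> 'k) set"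
  let ?M = "monalg_mult n :: ('f mat \<Rightarrow> 'k) \<Rightarrow> _"
  let ?B = "monalg_basis :: 'f mat \<Rightarrow> 'f mat \<Rightarrow> 'k"
  note assoc = monalg_mult_assoc[OF fC]
  note bb = mult_basis_basis[OF fC]
  have AM: "v \<in> monalg n" if "v \<in> ?A" for v using that unfolding rank_ideal_def by auto
  have eA: "?B (e_mat n r) \<in> ?A" by (rule basis_in_ideal[OF e_mat_carrier rank_e_mat])
  show ?thesis
  proof
    assume unit: "is_unit_of n ?A u"
    then have uu: "\<And>v. v \<in> ?A \<Longrightarrow> ?M u v = v \<and> ?M v u = v" unfolding is_unit_of_def by auto
    have b: "?M u (?B (e_mat n r)) = ?B (e_mat n r)" using uu[OF eA] by simp
    have a: "?M (?M (?B h) u) (?B g) = u"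
      if g: "g \<in> carrier_mat n n" and h: "h \<in> carrier_mat n n" and gh: "g * h = 1\<^sub>m n" "h * g = 1\<^sub>m n" for g h
    proof -
      define w where "w = ?M (?M (?B h) u) (?B g)"
      have wA: "w \<in> ?A" unfolding w_def by (rule ideal_mult_right[OF fC ideal_mult_left[OF fC uA]])
      have hg: "?M (?B h) (?B g) = ?B (1\<^sub>m n)" using bb[OF h g] gh by simp
      have wl: "?M w v = v" if v: "v \<in> ?A" for v
      proof -
        have gv: "?M (?B g) v \<in> ?A" by (rule ideal_mult_left[OF fC v])
        have "?M w v = ?M (?B h) (?M u (?M (?B g) v))" unfolding w_def assoc ..
        also have "\<dots> = ?M (?B h) (?M (?B g) v)" using uu[OF gv] by simp
        also have "\<dots> = ?M (?M (?B h) (?B g)) v" unfolding assoc ..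
        also have "\<dots> = v" unfolding hg using mult_one_left[OF fC AM[OF v]] .
        finally show ?thesis .
      qed
      have wr: "?M v w = v" if v: "v \<in> ?A" for v
      proof -
        have vh: "?M v (?B h) \<in> ?A" by (rule ideal_mult_right[OF fC v])
        have "?M v w = ?M (?M (?M v (?B h)) u) (?B g)" unfolding w_def assoc ..
        also have "\<dots> = ?M (?M v (?B h)) (?B g)" using uu[OF vh] by simp
        also have "\<dots> = ?M v (?M (?B h) (?B g))" unfolding assoc ..
        also have "\<dots> = v" unfolding hg using mult_one_right[OF fC AM[OF v]] .
        finally show ?thesis .
      qed
      have "u = ?M u w" using wr[OF uA] by simp
      also have "\<dots> = w" using uu[OF wA] by simp
      finally show ?thesis unfolding w_def by simp
    qed
    show "(\<forall>g\<in>carrier_mat n n. \<forall>h\<in>carrier_mat n n. g * h = 1\<^sub>m n \<and> h * g = 1\<^sub>m n \<longrightarrow>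
        ?M (?M (?B h) u) (?B g) = u) \<and> ?M u (?B (e_mat n r)) = ?B (e_mat n r)"
      using a b by blast
  next
    assume H: "(\<forall>g\<in>carrier_mat n n. \<forall>h\<in>carrier_mat n n. g * h = 1\<^sub>m n \<and> h * g = 1\<^sub>m n \<longrightarrow>
        ?M (?M (?B h) u) (?B g) = u) \<and> ?M u (?B (e_mat n r)) = ?B (e_mat n r)"
    then have a: "\<And>g h. g \<in> carrier_mat n n \<Longrightarrow> h \<in> carrier_mat n n \<Longrightarrow> g * h = 1\<^sub>m n \<Longrightarrow> h * g = 1\<^sub>m n \<Longrightarrow>
        ?M (?M (?B h) u) (?B g) = u"
      and b: "?M u (?B (e_mat n r)) = ?B (e_mat n r)" by auto
    have comm: "?M u (?B g) = ?M (?B g) u"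
      if g: "g \<in> carrier_mat n n" and h: "h \<in> carrier_mat n n" and gh: "g * h = 1\<^sub>m n" "h * g = 1\<^sub>m n" for g h
    proof -
      have "?M (?B g) u = ?M (?B g) (?M (?M (?B h) u) (?B g))" using a[OF g h gh] by simp
      also have "\<dots> = ?M (?M (?M (?B g) (?B h)) u) (?B g)" unfolding assoc ..
      also have "\<dots> = ?M u (?B g)"
      proof -
        have gh1: "?M (?B g) (?B h) = ?B (1\<^sub>m n)" using bb[OF g h] gh by simp
        show ?thesis unfolding gh1 mult_one_left[OF fC AM[OF uA]] ..
      qed
      finally show ?thesis by simp
    qed
    have lb: "?M u (?B m) = ?B m" if m: "m \<in> carrier_mat n n" and rk: "vec_space.rank n m \<le> r" for m
    proof -
      obtain P Q R where PQR: "P \<in> carrier_mat n n" "Q \<in> carrier_mat n n" "R \<in> carrier_mat n n"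
        "P * Q = 1\<^sub>m n" "Q * P = 1\<^sub>m n" "m = Q * R" "e_mat n r * R = R"
        using vec_space.normal_form[OF m rk] by blast
      have eR: "?M (?B (e_mat n r)) (?B R) = ?B R"
        using bb[OF e_mat_carrier[of n r] PQR(3)] PQR(7) by simp
      have QR: "?M (?B Q) (?B R) = ?B m"
        using bb[OF PQR(2,3)] PQR(6) by simp
      have uR: "?M u (?B R) = ?B R"
      proof -
        have "?M u (?B R) = ?M u (?M (?B (e_mat n r)) (?B R))" unfolding eR ..
        also have "\<dots> = ?M (?M u (?B (e_mat n r))) (?B R)" unfolding assoc ..
        also have "\<dots> = ?B R" unfolding b eR ..
        finally show ?thesis .
      qed
      have "?M u (?B m) = ?M u (?M (?B Q) (?B R))" unfolding QR ..
      also have "\<dots> = ?M (?M u (?B Q)) (?B R)" unfolding assoc ..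
      also have "\<dots> = ?M (?M (?B Q) u) (?B R)" unfolding comm[OF PQR(2,1,5,4)] ..
      also have "\<dots> = ?M (?B Q) (?M u (?B R))" unfolding assoc ..
      also have "\<dots> = ?B m" unfolding uR QR ..
      finally show ?thesis .
    qed
    have left: "?M u v = v" if "v \<in> ?A" for v
      by (rule left_id_from_basis[OF fC lb that])
    define uT where "uT = monalg_T u"
    have uTA: "uT \<in> ?A" unfolding uT_def by (rule monalg_T_ideal[OF uA])
    have rb: "?M (?B m) uT = ?B m" if m: "m \<in> carrier_mat n n" and rk: "vec_space.rank n m \<le> r" for m
    proof -
      have mT: "transpose_mat m \<in> carrier_mat n n" using m by auto
      have "vec_space.rank n (transpose_mat m) \<le> vec_space.rank n m"
        by (rule vec_space.rank_transpose_le[OF m])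
      then have rkT: "vec_space.rank n (transpose_mat m) \<le> r" using rk by simp
      have "?M (?B m) uT = monalg_T (?M u (?B (transpose_mat m)))"
        unfolding uT_def monalg_T_mult[OF fC] monalg_T_basis by simp
      also have "\<dots> = monalg_T (?B (transpose_mat m))" using lb[OF mT rkT] by simp
      also have "\<dots> = ?B m" unfolding monalg_T_basis by simp
      finally show ?thesis .
    qed
    have right: "?M v uT = v" if "v \<in> ?A" for v
      by (rule right_id_from_basis[OF fC rb that])
    have "uT = ?M u uT" using left[OF uTA] by simp
    also have "\<dots> = u" using right[OF uA] by simp
    finally have "uT = u" .
    then show "is_unit_of n ?A u" unfolding is_unit_of_def using uA left right by auto
  qed
qed


end
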